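(* Let $n\geq 3$ and let $L^B$ be a blow-up of the Boolean lattice $L\cong\mathbf{2}^n$. Then: (1) $V(G^c(L^B)_{SR})=V(G^c(L^B))$; (2) for all $x,y\in V(G^c(L^B)_{SR})$ with $x\neq y$ and $[x]=[y]$, $x$ is adjacent to $y$ in $G^c(L^B)_{SR}$; (3) for all $x,y\in V(G^c(L^B)_{SR})$ with $[x]\neq[y]$, $x$ is adjacent to $y$ in $G^c(L^B)_{SR}$ if and only if $x$ is not adjacent to $y$ in $G^c(L^B)$.
   Context: Blow-up: keep $0,1$ of $L=\mathbf{2}^n$ and replace every $x\in L\setminus\{0,1\}$ by a finite nonempty chain $C_x$; within $C_x$ use the chain order, for $a\in C_x,b\in C_y$, $x\neq y$, put $a\leq b$ iff $x\leq y$ in $L$; $0$ is least and $1$ greatest. For $a$ in a lattice with $0$, $a^\perp=\{b: a\wedge b=0\}$; $x\sim y$ iff $x^\perp=y^\perp$, and $[x]$ is the class of $x$. $Z^*(M)$ is the set of nonzero $a$ with $a\wedge b=0$ for some $b\neq 0$; $G^c(M)$ has vertex set $Z^*(M)$, distinct $a,b$ adjacent iff $a\wedge b\neq 0$. In a connected graph, $u$ is maximally distant from $v$ if $d(v,w)\leq d(u,v)$ for all neighbours $w$ of $u$; mutually maximally distant means each is maximally distant from the other. $G_{SR}$ has as vertices those $u$ mutually maximally distant from some $v$, with distinct vertices adjacent iff mutually maximally distant in $G$. *)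

theory Defs
  imports Main
begin

definition meet_zero :: "'a set \<Rightarrow> ('a \<Rightarrow> 'a \<Rightarrow> bool) \<Rightarrow> 'a \<Rightarrow> 'a \<Rightarrow> 'a \<Rightarrow> bool" where
  "meet_zero M le z a b \<longleftrightarrow> (\<forall>c\<in>M. le c a \<and> le c b \<longrightarrow> c = z)"

definition perp :: "'a set \<Rightarrow> ('a \<Rightarrow> 'a \<Rightarrow> bool) \<Rightarrow> 'a \<Rightarrow> 'a \<Rightarrow> 'a set" where
  "perp M le z a = {b\<in>M. meet_zero M le z a b}"

definition perp_class :: "'a set \<Rightarrow> ('a \<Rightarrow> 'a \<Rightarrow> bool) \<Rightarrow> 'a \<Rightarrow> 'a \<Rightarrow> 'a set" where
  "perp_class M le z x = {y\<in>M. perp M le z y = perp M le z x}"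

definition zdiv :: "'a set \<Rightarrow> ('a \<Rightarrow> 'a \<Rightarrow> bool) \<Rightarrow> 'a \<Rightarrow> 'a set" where
  "zdiv M le z = {a\<in>M. a \<noteq> z \<and> (\<exists>b\<in>M. b \<noteq> z \<and> meet_zero M le z a b)}"

definition gc_adj :: "'a set \<Rightarrow> ('a \<Rightarrow> 'a \<Rightarrow> bool) \<Rightarrow> 'a \<Rightarrow> 'a \<Rightarrow> 'a \<Rightarrow> bool" where
  "gc_adj M le z a b \<longleftrightarrow> a \<in> zdiv M le z \<and> b \<in> zdiv M le z \<and> a \<noteq> b \<and> \<not> meet_zero M le z a b"

definition is_walk :: "'v set \<Rightarrow> ('v \<Rightarrow> 'v \<Rightarrow> bool) \<Rightarrow> 'v list \<Rightarrow> bool" where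
  "is_walk V E p \<longleftrightarrow> p \<noteq> [] \<and> set p \<subseteq> V \<and> (\<forall>i. Suc i < length p \<longrightarrow> E (p ! i) (p ! Suc i))"

text \<open>Graph distance (number of edges of a shortest walk); meaningful in a connected graph.\<close>
definition gdist :: "'v set \<Rightarrow> ('v \<Rightarrow> 'v \<Rightarrow> bool) \<Rightarrow> 'v \<Rightarrow> 'v \<Rightarrow> nat" where
  "gdist V E u v = (LEAST k. \<exists>p. is_walk V E p \<and> hd p = u \<and> last p = v \<and> length p = Suc k)"

definition max_dist :: "'v set \<Rightarrow> ('v \<Rightarrow> 'v \<Rightarrow> bool) \<Rightarrow> 'v \<Rightarrow> 'v \<Rightarrow> bool" where
  "max_dist V E u v \<longleftrightarrow> (\<forall>w\<in>V. E u w \<longrightarrow> gdist V E v w \<le> gdist V E u v)"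

definition mmd :: "'v set \<Rightarrow> ('v \<Rightarrow> 'v \<Rightarrow> bool) \<Rightarrow> 'v \<Rightarrow> 'v \<Rightarrow> bool" where
  "mmd V E u v \<longleftrightarrow> u \<in> V \<and> v \<in> V \<and> max_dist V E u v \<and> max_dist V E v u"

definition sr_vertices :: "'v set \<Rightarrow> ('v \<Rightarrow> 'v \<Rightarrow> bool) \<Rightarrow> 'v set" where
  "sr_vertices V E = {u\<in>V. \<exists>v\<in>V. mmd V E u v}"

definition sr_adj :: "'v set \<Rightarrow> ('v \<Rightarrow> 'v \<Rightarrow> bool) \<Rightarrow> 'v \<Rightarrow> 'v \<Rightarrow> bool" where
  "sr_adj V E u v \<longleftrightarrow> u \<in> sr_vertices V E \<and> v \<in> sr_vertices V E \<and> u \<noteq> v \<and> mmd V E u v"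

text \<open>Element x of 2^n other than 0,1 is replaced by the chain C_x = {Mid x 0 < ... < Mid x (k x - 1)}.\<close>
datatype blow = Bot | Top | Mid "nat set" nat

definition proper_elt :: "nat \<Rightarrow> nat set \<Rightarrow> bool" where
  "proper_elt n x \<longleftrightarrow> x \<subseteq> {0..<n} \<and> x \<noteq> {} \<and> x \<noteq> {0..<n}"

definition blowup :: "nat \<Rightarrow> (nat set \<Rightarrow> nat) \<Rightarrow> blow set" where
  "blowup n k = {Bot, Top} \<union> {Mid x i | x i. proper_elt n x \<and> i < k x}"

fun blow_le :: "blow \<Rightarrow> blow \<Rightarrow> bool" where
  "blow_le Bot _ = True"
| "blow_le _ Top = True"
| "blow_le (Mid x i) (Mid y j) = (if x = y then i \<le> j else x \<subseteq> y)"
| "blow_le _ _ = False"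

end

theory Submission
  imports Defs
begin

lemma gdist_le_walk:
  "is_walk V E p \<Longrightarrow> hd p = u \<Longrightarrow> last p = v \<Longrightarrow> length p = Suc k \<Longrightarrow> gdist V E u v \<le> k"
  unfolding gdist_def by (rule Least_le) blast

lemma gdist_refl: "u \<in> V \<Longrightarrow> gdist V E u u = 0"
proof -
  assume "u \<in> V"
  hence "is_walk V E [u]" by (simp add: is_walk_def)
  from gdist_le_walk[OF this] show ?thesis by simp
qed

lemma gdist_ex:
  assumes "is_walk V E p" "hd p = u" "last p = v"
  shows "\<exists>q. is_walk V E q \<and> hd q = u \<and> last q = v \<and> length q = Suc (gdist V E u v)"
proof -
  have ex: "\<exists>k. \<exists>p. is_walk V E p \<and> hd p = u \<and> last p = v \<and> length p = Suc k"
    using assms by (metis is_walk_def length_greater_0_conv Suc_pred)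
  show ?thesis unfolding gdist_def by (rule LeastI_ex[OF ex])
qed

lemma gdist_one:
  assumes "E u v" "u \<in> V" "v \<in> V" "u \<noteq> v"
  shows "gdist V E u v = 1"
proof -
  have w: "is_walk V E [u, v]" using assms by (auto simp: is_walk_def less_Suc_eq)
  have le: "gdist V E u v \<le> 1" using gdist_le_walk[OF w] by simp
  obtain q where q: "is_walk V E q" "hd q = u" "last q = v" "length q = Suc (gdist V E u v)"
    using gdist_ex[OF w] by auto
  have "gdist V E u v \<noteq> 0"
  proof
    assume "gdist V E u v = 0"
    then obtain a where "q = [a]" using q(4) by (cases q) auto
    thus False using q assms(4) by simp
  qed
  thus ?thesis using le by simp
qed

lemma gdist_two:
  assumes "E u w" "E w v" "\<not> E u v" "u \<in> V" "v \<in> V" "w \<in> V" "u \<noteq> v"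
  shows "gdist V E u v = 2"
proof -
  have w: "is_walk V E [u, w, v]" using assms
    by (auto simp: is_walk_def less_Suc_eq nth_Cons split: nat.splits)
  have le: "gdist V E u v \<le> 2" using gdist_le_walk[OF w] by simp
  obtain q where q: "is_walk V E q" "hd q = u" "last q = v" "length q = Suc (gdist V E u v)"
    using gdist_ex[OF w] by auto
  have "gdist V E u v \<noteq> 0"
  proof
    assume "gdist V E u v = 0"
    then obtain a where "q = [a]" using q(4) by (cases q) auto
    thus False using q assms(7) by simp
  qed
  moreover have "gdist V E u v \<noteq> 1"
  proof
    assume "gdist V E u v = 1"
    then obtain a b where qq: "q = [a, b]" using q(4)
      by (cases q; cases "tl q") auto
    have "E (q ! 0) (q ! Suc 0)" using q(1) qq by (auto simp: is_walk_def)
    thus False using qq q assms(3) by simp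
  qed
  ultimately show ?thesis using le by simp
qed

fun lab :: "blow \<Rightarrow> nat set" where
  "lab (Mid x i) = x" | "lab _ = {}"

lemma proper_pair:
  assumes "n \<ge> 3" "p < n" "q < n"
  shows "proper_elt n {p, q}"
proof -
  have "card {p, q} \<le> 2" by (simp add: card_insert_if)
  hence "{p, q} \<noteq> {0..<n}" using assms(1) by auto
  thus ?thesis using assms unfolding proper_elt_def by auto
qed

lemma mem_blowup_Mid: "Mid x i \<in> blowup n k \<longleftrightarrow> proper_elt n x \<and> i < k x"
  by (auto simp: blowup_def)

lemma blow_le_Bot: "blow_le c Bot \<longleftrightarrow> c = Bot"
  by (cases c) auto

lemma mz_mid:
  assumes k: "\<And>x. proper_elt n x \<Longrightarrow> k x \<ge> 1"
    and a: "Mid x i \<in> blowup n k" and b: "Mid y j \<in> blowup n k"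
  shows "meet_zero (blowup n k) blow_le Bot (Mid x i) (Mid y j) \<longleftrightarrow> x \<inter> y = {}"
proof
  assume mz: "meet_zero (blowup n k) blow_le Bot (Mid x i) (Mid y j)"
  show "x \<inter> y = {}"
  proof (rule ccontr)
    assume ne: "x \<inter> y \<noteq> {}"
    have px: "proper_elt n x" and py: "proper_elt n y" using a b by (auto simp: mem_blowup_Mid)
    show False
    proof (cases "x \<inter> y = x")
      case True
      have "Mid x 0 \<in> blowup n k" using px k[OF px] by (auto simp: mem_blowup_Mid)
      moreover have "blow_le (Mid x 0) (Mid x i)" "blow_le (Mid x 0) (Mid y j)" using True by auto
      ultimately show False using mz unfolding meet_zero_def by force
    next
      case F1: False
      show False
      proof (cases "x \<inter> y = y")
        case True
        have "Mid y 0 \<in> blowup n k" using py k[OF py] by (auto simp: mem_blowup_Mid)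
        moreover have "blow_le (Mid y 0) (Mid x i)" "blow_le (Mid y 0) (Mid y j)" using True by auto
        ultimately show False using mz unfolding meet_zero_def by force
      next
        case False
        have pw: "proper_elt n (x \<inter> y)" using px py ne unfolding proper_elt_def by auto
        have "Mid (x \<inter> y) 0 \<in> blowup n k" using pw k[OF pw] by (auto simp: mem_blowup_Mid)
        moreover have "blow_le (Mid (x \<inter> y) 0) (Mid x i)" "blow_le (Mid (x \<inter> y) 0) (Mid y j)"
          using False F1 by auto
        ultimately show False using mz unfolding meet_zero_def by force
      qed
    qed
  qed
next
  assume d: "x \<inter> y = {}"
  show "meet_zero (blowup n k) blow_le Bot (Mid x i) (Mid y j)"
    unfolding meet_zero_def
  proof (intro ballI impI)
    fix c assume c: "c \<in> blowup n k" "blow_le c (Mid x i) \<and> blow_le c (Mid y j)"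
    show "c = Bot"
    proof (cases c)
      case (Mid w l)
      hence "w \<subseteq> x" "w \<subseteq> y" using c(2) by (auto split: if_splits)
      moreover have "w \<noteq> {}" using c(1) Mid by (auto simp: mem_blowup_Mid proper_elt_def)
      ultimately show ?thesis using d by blast
    qed (use c in auto)
  qed
qed

lemma mz_gen:
  assumes k: "\<And>x. proper_elt n x \<Longrightarrow> k x \<ge> 1"
    and a: "Mid x i \<in> blowup n k" and c: "c \<in> blowup n k"
  shows "meet_zero (blowup n k) blow_le Bot (Mid x i) c \<longleftrightarrow> c = Bot \<or> (\<exists>y j. c = Mid y j \<and> x \<inter> y = {})"
proof (cases c)
  case Bot
  then show ?thesis by (auto simp: meet_zero_def blow_le_Bot)
next
  case Top
  have "\<not> meet_zero (blowup n k) blow_le Bot (Mid x i) c"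
    unfolding meet_zero_def
  proof
    assume "\<forall>ca\<in>blowup n k. blow_le ca (Mid x i) \<and> blow_le ca c \<longrightarrow> ca = Bot"
    hence "blow_le (Mid x i) (Mid x i) \<and> blow_le (Mid x i) c \<longrightarrow> Mid x i = Bot" using a by blast
    thus False using Top by simp
  qed
  then show ?thesis using Top by auto
next
  case (Mid y j)
  then show ?thesis using mz_mid[OF k a] c by auto
qed

lemma V_char:
  assumes k: "\<And>x. proper_elt n x \<Longrightarrow> k x \<ge> 1"
  shows "a \<in> zdiv (blowup n k) blow_le Bot \<longleftrightarrow> (\<exists>x i. a = Mid x i \<and> proper_elt n x \<and> i < k x)"
proof
  assume "a \<in> zdiv (blowup n k) blow_le Bot"
  hence a: "a \<in> blowup n k" "a \<noteq> Bot" and b: "\<exists>b\<in>blowup n k. b \<noteq> Bot \<and> meet_zero (blowup n k) blow_le Bot a b"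
    by (auto simp: zdiv_def)
  have "a \<noteq> Top"
  proof
    assume T: "a = Top"
    from b obtain b where "b \<in> blowup n k" "b \<noteq> Bot" "meet_zero (blowup n k) blow_le Bot a b" by auto
    moreover have "blow_le b Top" "blow_le b b" by (cases b; simp)+
    ultimately show False using T unfolding meet_zero_def by auto
  qed
  thus "\<exists>x i. a = Mid x i \<and> proper_elt n x \<and> i < k x" using a by (auto simp: blowup_def)
next
  assume "\<exists>x i. a = Mid x i \<and> proper_elt n x \<and> i < k x"
  then obtain x i where a: "a = Mid x i" "proper_elt n x" "i < k x" by auto
  define y where "y = {0..<n} - x"
  have py: "proper_elt n y" using a(2) unfolding y_def proper_elt_def by auto
  have m1: "Mid x i \<in> blowup n k" using a by (simp add: mem_blowup_Mid)
  have m2: "Mid y 0 \<in> blowup n k" using py k[OF py] by (simp add: mem_blowup_Mid)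
  have "meet_zero (blowup n k) blow_le Bot (Mid x i) (Mid y 0)"
    using mz_mid[OF k m1 m2] y_def by auto
  thus "a \<in> zdiv (blowup n k) blow_le Bot" using m1 m2 a unfolding zdiv_def by auto
qed


theorem lemma3p16:
  fixes n :: nat and k :: "nat set \<Rightarrow> nat"
  assumes "n \<ge> 3"
    and "\<And>x. proper_elt n x \<Longrightarrow> k x \<ge> 1"
  defines "M \<equiv> blowup n k"
  defines "V \<equiv> zdiv M blow_le Bot"
  defines "E \<equiv> gc_adj M blow_le Bot"
  shows "sr_vertices V E = V
    \<and> (\<forall>x\<in>sr_vertices V E. \<forall>y\<in>sr_vertices V E.
           x \<noteq> y \<and> perp_class M blow_le Bot x = perp_class M blow_le Bot y \<longrightarrow> sr_adj V E x y)
    \<and> (\<forall>x\<in>sr_vertices V E. \<forall>y\<in>sr_vertices V E.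
           perp_class M blow_le Bot x \<noteq> perp_class M blow_le Bot y \<longrightarrow> (sr_adj V E x y \<longleftrightarrow> \<not> E x y))"
proof -
  note k = assms(2)
  have Vc: "a \<in> V \<longleftrightarrow> (\<exists>x i. a = Mid x i \<and> proper_elt n x \<and> i < k x)" for a
    unfolding V_def M_def by (rule V_char[OF k])
  have VM: "a \<in> V \<Longrightarrow> a \<in> M" for a using Vc M_def mem_blowup_Mid by auto
  have labp: "a \<in> V \<Longrightarrow> proper_elt n (lab a)" for a using Vc by auto
  have labne: "a \<in> V \<Longrightarrow> lab a \<noteq> {}" for a using labp proper_elt_def by auto
  have Eiff: "E a b \<longleftrightarrow> a \<in> V \<and> b \<in> V \<and> a \<noteq> b \<and> lab a \<inter> lab b \<noteq> {}" for a b
  proof -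
    have "meet_zero M blow_le Bot a b \<longleftrightarrow> lab a \<inter> lab b = {}" if "a \<in> V" "b \<in> V"
      using that Vc VM mz_mid[OF k] M_def by fastforce
    thus ?thesis unfolding E_def gc_adj_def V_def[symmetric] by blast
  qed
  have Esym: "E a b \<Longrightarrow> E b a" for a b using Eiff by blast
  have pc: "perp_class M blow_le Bot a = perp_class M blow_le Bot b \<longleftrightarrow> lab a = lab b"
    if a: "a \<in> V" and b: "b \<in> V" for a b
  proof -
    have pcp: "perp_class M blow_le Bot a = perp_class M blow_le Bot b \<longleftrightarrow>
       perp M blow_le Bot a = perp M blow_le Bot b"
    proof
      assume "perp_class M blow_le Bot a = perp_class M blow_le Bot b"
      moreover have "a \<in> perp_class M blow_le Bot a" using VM[OF a] unfolding perp_class_def by simp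
      ultimately have "a \<in> perp_class M blow_le Bot b" by simp
      thus "perp M blow_le Bot a = perp M blow_le Bot b" unfolding perp_class_def by simp
    next
      assume "perp M blow_le Bot a = perp M blow_le Bot b"
      thus "perp_class M blow_le Bot a = perp_class M blow_le Bot b" unfolding perp_class_def by simp
    qed
    have pe: "c \<in> perp M blow_le Bot a \<longleftrightarrow> c \<in> M \<and> (c = Bot \<or> (\<exists>y j. c = Mid y j \<and> lab a \<inter> y = {}))"
      if aV: "a \<in> V" for a c
    proof -
      obtain x i where "a = Mid x i" using Vc aV by auto
      thus ?thesis using mz_gen[OF k, where x=x and i=i and c=c] VM[OF aV] M_def unfolding perp_def by auto
    qed
    have "perp M blow_le Bot a = perp M blow_le Bot b \<longleftrightarrow> lab a = lab b"
    proof
      assume "lab a = lab b" thus "perp M blow_le Bot a = perp M blow_le Bot b"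
        by (intro set_eqI) (simp add: pe[OF a] pe[OF b])
    next
      assume eq: "perp M blow_le Bot a = perp M blow_le Bot b"
      have sub: "lab a \<subseteq> lab b" if a: "a \<in> V" and b: "b \<in> V"
        and eq: "perp M blow_le Bot a = perp M blow_le Bot b" for a b
      proof -
        define y where "y = {0..<n} - lab b"
        have py: "proper_elt n y" using labp[OF b] unfolding y_def proper_elt_def by auto
        have "Mid y 0 \<in> M" using py k[OF py] M_def mem_blowup_Mid by auto
        hence "Mid y 0 \<in> perp M blow_le Bot b" using pe[OF b] y_def by auto
        hence "Mid y 0 \<in> perp M blow_le Bot a" using eq by simp
        hence "lab a \<inter> y = {}" using pe[OF a] by auto
        thus ?thesis using labp[OF a] y_def proper_elt_def by auto
      qed
      show "lab a = lab b" using sub[OF a b eq] sub[OF b a eq[symmetric]] by blast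
    qed
    thus ?thesis using pcp by simp
  qed
  have d1: "gdist V E u v = 1" if "E u v" for u v
  proof -
    have "u \<in> V" "v \<in> V" "u \<noteq> v" using that Eiff by auto
    thus ?thesis using gdist_one[of E u v V] that by blast
  qed
  have mid: "\<exists>w\<in>V. E u w \<and> E w v" if uv: "u \<in> V" "v \<in> V" "u \<noteq> v" "\<not> E u v" for u v
  proof -
    have dj: "lab u \<inter> lab v = {}" using that Eiff by blast
    obtain p where p: "p \<in> lab u" using labne[OF uv(1)] by auto
    obtain q where q: "q \<in> lab v" using labne[OF uv(2)] by auto
    have pn: "p < n" "q < n" using p q labp[OF uv(1)] labp[OF uv(2)] unfolding proper_elt_def by auto
    have pr: "proper_elt n {p, q}" using proper_pair[OF assms(1) pn] .
    define w where "w = Mid {p, q} 0"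
    have wV: "w \<in> V" using Vc pr k[OF pr] w_def by auto
    have "w \<noteq> u" using q dj w_def by auto
    moreover have "w \<noteq> v" using p dj w_def by auto
    moreover have "lab u \<inter> lab w \<noteq> {}" "lab w \<inter> lab v \<noteq> {}" using p q w_def by auto
    ultimately have "E u w" "E w v" using wV uv Eiff by auto
    thus ?thesis using wV by blast
  qed
  have d2: "gdist V E u v = 2" if uv: "u \<in> V" "v \<in> V" "u \<noteq> v" "\<not> E u v" for u v
  proof -
    obtain w where w: "w \<in> V" "E u w" "E w v" using mid[OF uv] by blast
    show ?thesis using gdist_two[of E u w v V, OF w(2) w(3) uv(4) uv(1) uv(2) w(1) uv(3)] .
  qed
  have dle: "gdist V E u v \<le> 2" if uv: "u \<in> V" "v \<in> V" for u v
  proof (cases "u = v")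
    case True thus ?thesis using gdist_refl[OF uv(1)] by simp
  next
    case F: False
    show ?thesis
    proof (cases "E u v")
      case True thus ?thesis using d1[OF True] by simp
    next
      case False thus ?thesis using d2[OF uv F False] by simp
    qed
  qed
  have mmd_far: "mmd V E u v" if uv: "u \<in> V" "v \<in> V" "u \<noteq> v" "\<not> E u v" for u v
  proof -
    have "\<not> E v u" using uv Esym by blast
    hence "gdist V E v u = 2" using d2 uv by auto
    moreover have "gdist V E u v = 2" using d2 uv by auto
    ultimately have "max_dist V E u v" "max_dist V E v u"
      unfolding max_dist_def using dle uv by auto
    thus ?thesis unfolding mmd_def using uv by auto
  qed
  have mmd_same: "mmd V E u v" if "u \<in> V" "v \<in> V" "u \<noteq> v" "lab u = lab v" for u v
  proof -
    have md: "max_dist V E a b" if "a \<in> V" "b \<in> V" "a \<noteq> b" "lab a = lab b" for a b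
      unfolding max_dist_def
    proof (intro ballI impI)
      fix w assume w: "w \<in> V" "E a w"
      have Eab: "E a b" using that Eiff labne by auto
      show "gdist V E b w \<le> gdist V E a b"
      proof (cases "w = b")
        case True thus ?thesis using gdist_refl[OF that(2)] by simp
      next
        case False
        hence "E b w" using w that Eiff by auto
        thus ?thesis using d1 Eab by simp
      qed
    qed
    show ?thesis using md[of u v] md[of v u] that unfolding mmd_def by auto
  qed
  have notmd: "\<not> max_dist V E u v" if E: "E u v" and p: "p \<in> lab u" "p \<notin> lab v" for u v p
  proof
    assume md: "max_dist V E u v"
    have uV: "u \<in> V" and vV: "v \<in> V" using E Eiff by auto
    have pn: "p < n" using labp[OF uV] p unfolding proper_elt_def by auto
    have pr: "proper_elt n {p}" using proper_pair[OF assms(1) pn pn] by simp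
    define w where "w = Mid {p} 0"
    have wV: "w \<in> V" using Vc pr k[OF pr] w_def by auto
    have "w \<noteq> u"
    proof
      assume "w = u" hence "lab u = {p}" using w_def by auto
      thus False using E Eiff p by auto
    qed
    hence Euw: "E u w" using wV uV p Eiff w_def by auto
    have "w \<noteq> v" using p w_def by auto
    moreover have "\<not> E v w" using Eiff w_def p by auto
    ultimately have "gdist V E v w = 2" using d2 vV wV by auto
    moreover have "gdist V E u v = 1" using d1 E by simp
    ultimately show False using md Euw wV unfolding max_dist_def by fastforce
  qed
  have partner: "\<exists>v\<in>V. mmd V E u v" if u: "u \<in> V" for u
  proof -
    define y where "y = {0..<n} - lab u"
    have py: "proper_elt n y" using labp[OF u] unfolding y_def proper_elt_def by auto
    define v where "v = Mid y 0"
    have vV: "v \<in> V" using Vc py k[OF py] v_def by auto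
    have dj: "lab u \<inter> lab v = {}" using v_def y_def by auto
    hence "u \<noteq> v" using labne[OF u] by auto
    moreover have "\<not> E u v" using dj Eiff by auto
    ultimately show ?thesis using mmd_far u vV by blast
  qed
  have P1: "sr_vertices V E = V" unfolding sr_vertices_def using partner by blast
  have P2: "\<forall>x\<in>sr_vertices V E. \<forall>y\<in>sr_vertices V E.
           x \<noteq> y \<and> perp_class M blow_le Bot x = perp_class M blow_le Bot y \<longrightarrow> sr_adj V E x y"
  proof (intro ballI impI)
    fix x y assume x: "x \<in> sr_vertices V E" and y: "y \<in> sr_vertices V E"
      and h: "x \<noteq> y \<and> perp_class M blow_le Bot x = perp_class M blow_le Bot y"
    have xV: "x \<in> V" and yV: "y \<in> V" using x y P1 by auto
    have "lab x = lab y" using h pc[OF xV yV] by simp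
    hence "mmd V E x y" using mmd_same[OF xV yV] h by blast
    thus "sr_adj V E x y" unfolding sr_adj_def using x y h by blast
  qed
  have P3: "\<forall>x\<in>sr_vertices V E. \<forall>y\<in>sr_vertices V E.
           perp_class M blow_le Bot x \<noteq> perp_class M blow_le Bot y \<longrightarrow> (sr_adj V E x y \<longleftrightarrow> \<not> E x y)"
  proof (intro ballI impI)
    fix x y assume x: "x \<in> sr_vertices V E" and y: "y \<in> sr_vertices V E"
      and ne: "perp_class M blow_le Bot x \<noteq> perp_class M blow_le Bot y"
    have xV: "x \<in> V" and yV: "y \<in> V" using x y P1 by auto
    have lne: "lab x \<noteq> lab y" using ne pc[OF xV yV] by simp
    hence xy: "x \<noteq> y" by auto
    show "sr_adj V E x y \<longleftrightarrow> \<not> E x y"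
    proof
      assume sa: "sr_adj V E x y"
      show "\<not> E x y"
      proof
        assume Exy: "E x y"
        from lne obtain p where "(p \<in> lab x \<and> p \<notin> lab y) \<or> (p \<in> lab y \<and> p \<notin> lab x)" by blast
        then show False
        proof
          assume "p \<in> lab x \<and> p \<notin> lab y"
          thus False using notmd[OF Exy] sa unfolding sr_adj_def mmd_def by blast
        next
          assume "p \<in> lab y \<and> p \<notin> lab x"
          thus False using notmd[OF Esym[OF Exy]] sa unfolding sr_adj_def mmd_def by blast
        qed
      qed
    next
      assume "\<not> E x y"
      thus "sr_adj V E x y" using mmd_far xV yV xy x y unfolding sr_adj_def by blast
    qed
  qed
  show ?thesis using P1 P2 P3 by blast
qed

end
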